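(* Let $\mathcal{H}$ be a real Hilbert space, let $A\colon \mathcal{H}\rightrightarrows\mathcal{H}$ be maximally monotone and let $B\colon \mathcal{H}\to\mathcal{H}$ be monotone and $L$-Lipschitz. Let $x\in(A+B)^{-1}(0)$, suppose $(\lambda_k)_{k\geq-1}\subseteq\left[\varepsilon,\frac{1-2\varepsilon}{2L}\right]$ for some $\varepsilon>0$, and let $(x_k)$ be given by $x_0,x_{-1}\in\mathcal{H}$ and $$x_{k+1} = J_{\lambda_k A}\bigl(x_k - \lambda_k B(x_k) - \lambda_{k-1}(B(x_k)-B(x_{k-1}))\bigr)\quad\forall k\in\mathbb{N}.$$ Then, for all $k\in\mathbb{N}$, $$\|x_{k+1}-x\|^2+2\lambda_k\langle B(x_{k+1})-B(x_k),x-x_{k+1}\rangle + \left(\tfrac{1}{2}+\varepsilon\right)\|x_{k+1}-x_k\|^2 \leq \|x_k-x\|^2 + 2\lambda_{k-1}\langle B(x_k)-B(x_{k-1}), x-x_{k}\rangle +\tfrac{1}{2}\|x_{k}-x_{k-1}\|^2.$$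
   Context: $J_{\lambda A}:=(I+\lambda A)^{-1}$ denotes the resolvent. *)

theory Defs
  imports "HOL-Analysis.Analysis"
begin

text \<open>Set-valued operators on a real inner product space are modelled as maps
  A :: 'a \<Rightarrow> 'a set (the value A x is the image set; its graph is {(x,u). u \<in> A x}).\<close>

definition monotone_op :: "('a::real_inner \<Rightarrow> 'a set) \<Rightarrow> bool" where
  "monotone_op A \<longleftrightarrow>
     (\<forall>x y u v. u \<in> A x \<longrightarrow> v \<in> A y \<longrightarrow> inner (x - y) (u - v) \<ge> 0)"

definition maximal_monotone :: "('a::real_inner \<Rightarrow> 'a set) \<Rightarrow> bool" where
  "maximal_monotone A \<longleftrightarrow>
     monotone_op A \<and> (\<forall>B. monotone_op B \<and> (\<forall>x. A x \<subseteq> B x) \<longrightarrow> B = A)"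

definition monotone_fun :: "('a::real_inner \<Rightarrow> 'a) \<Rightarrow> bool" where
  "monotone_fun B \<longleftrightarrow> (\<forall>x y. inner (x - y) (B x - B y) \<ge> 0)"

text \<open>Resolvent J_{\<lambda>A} = (I + \<lambda>A)^{-1}, as a set-valued inverse:
  z \<in> J_{\<lambda>A}(y) iff y \<in> z + \<lambda> A z.  (For maximally monotone A and \<lambda> > 0 it is
  single-valued and everywhere defined.)\<close>
definition resolvent :: "real \<Rightarrow> ('a::real_inner \<Rightarrow> 'a set) \<Rightarrow> 'a \<Rightarrow> 'a set" where
  "resolvent lam A y = {z. \<exists>u \<in> A z. y = z + lam *\<^sub>R u}"

end

theory Submission
  imports Defs
begin

theorem lemma2p4:
  fixes A :: "'a::{real_inner, complete_space} \<Rightarrow> 'a set"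
    and B :: "'a \<Rightarrow> 'a"
    and L \<epsilon> :: real
    and lam :: "int \<Rightarrow> real"
    and xs :: "int \<Rightarrow> 'a"
    and x :: 'a
  assumes A_max: "maximal_monotone A"
    and B_mono: "monotone_fun B"
    and B_lip: "L-lipschitz_on UNIV B"
    and zero: "0 \<in> {u + B x | u. u \<in> A x}"
    and eps: "\<epsilon> > 0"
    and lam_bounds: "\<And>k. k \<ge> -1 \<Longrightarrow> \<epsilon> \<le> lam k \<and> 2 * L * lam k \<le> 1 - 2 * \<epsilon>"
    and iter: "\<And>k. k \<ge> 0 \<Longrightarrow>
       xs (k + 1) \<in> resolvent (lam k) A
         (xs k - lam k *\<^sub>R B (xs k) - lam (k - 1) *\<^sub>R (B (xs k) - B (xs (k - 1))))"
    and k: "k \<ge> (0::int)"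
  shows "(norm (xs (k + 1) - x))\<^sup>2
           + 2 * lam k * inner (B (xs (k + 1)) - B (xs k)) (x - xs (k + 1))
           + (1 / 2 + \<epsilon>) * (norm (xs (k + 1) - xs k))\<^sup>2
         \<le> (norm (xs k - x))\<^sup>2
           + 2 * lam (k - 1) * inner (B (xs k) - B (xs (k - 1))) (x - xs k)
           + 1 / 2 * (norm (xs k - xs (k - 1)))\<^sup>2"
proof -
  define p where "p = xs (k + 1)"
  define q where "q = xs k"
  define r where "r = xs (k - 1)"
  define l where "l = lam k"
  define m where "m = lam (k - 1)"
  have L0: "0 \<le> L" using B_lip by (rule lipschitz_on_nonneg)
  have lb: "\<epsilon> \<le> l" "2 * L * l \<le> 1 - 2 * \<epsilon>" using lam_bounds[of k] k by (auto simp: l_def)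
  have mb: "\<epsilon> \<le> m" "2 * L * m \<le> 1 - 2 * \<epsilon>" using lam_bounds[of "k - 1"] k by (auto simp: m_def)
  have Amon: "monotone_op A" using A_max by (simp add: maximal_monotone_def)
  obtain a where a: "a \<in> A p" and h0: "q - l *\<^sub>R B q - m *\<^sub>R (B q - B r) = p + l *\<^sub>R a"
    using iter[OF k] by (auto simp: resolvent_def p_def q_def r_def l_def m_def)
  obtain u where u: "u \<in> A x" and "0 = u + B x" using zero by auto
  hence ux: "u = - B x" by (metis add.commute add_eq_0_iff)
  have h1: "0 \<le> inner (p - x) (a - u)" using Amon a u by (auto simp: monotone_op_def)
  have h1': "0 \<le> inner (p - x) (l *\<^sub>R a - l *\<^sub>R u)"
    using h1 lb eps by (simp add: inner_diff_right)
  have la: "l *\<^sub>R a = q - l *\<^sub>R B q - m *\<^sub>R (B q - B r) - p" using h0 by (simp add: algebra_simps)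
  have h2: "0 \<le> inner (p - x) (B p - B x)" using B_mono by (simp add: monotone_fun_def)
  have h3: "inner (q - p) (B q - B r) \<le> L * norm (q - r) * norm (q - p)"
  proof -
    have "inner (q - p) (B q - B r) \<le> norm (q - p) * norm (B q - B r)" by (rule norm_cauchy_schwarz)
    also have "\<dots> \<le> norm (q - p) * (L * norm (q - r))"
      by (intro mult_left_mono lipschitz_on_normD[OF B_lip]) auto
    finally show ?thesis by (simp add: algebra_simps)
  qed
  define na where "na = norm (q - r)"
  define nb where "nb = norm (q - p)"
  have h4: "2 * m * inner (q - p) (B q - B r) \<le> 1/2 * na^2 + (1/2 - \<epsilon>) * nb^2"
  proof -
    have "2 * m * inner (q - p) (B q - B r) \<le> 2 * m * (L * na * nb)"
      using h3 mb eps by (intro mult_left_mono) (auto simp: na_def nb_def)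
    also have "\<dots> = (2 * L * m) * (na * nb)" by simp
    also have "\<dots> \<le> (1 - 2 * \<epsilon>) * (na * nb)"
      using mb by (intro mult_right_mono) (auto simp: na_def nb_def)
    also have "\<dots> \<le> (1 - 2 * \<epsilon>) * ((na^2 + nb^2)/2)"
    proof (cases "1 - 2 * \<epsilon> \<ge> 0")
      case True
      have "na * nb \<le> (na^2 + nb^2)/2" using sum_squares_ge_zero[of "na - nb" 0]
        by (simp add: power2_eq_square algebra_simps)
      then show ?thesis using True by (intro mult_left_mono) auto
    next
      case False
      have "0 \<le> L * m" using mb L0 eps by simp
      then show ?thesis using mb False by linarith
    qed
    also have "\<dots> \<le> 1/2 * na^2 + (1/2 - \<epsilon>) * nb^2"
    proof -
      have "(1 - 2 * \<epsilon>) * ((na^2 + nb^2)/2) = 1/2 * na^2 + (1/2 - \<epsilon>) * nb^2 - \<epsilon> * na^2"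
        by (simp add: field_simps)
      moreover have "0 \<le> \<epsilon> * na^2" using eps by simp
      ultimately show ?thesis by linarith
    qed
    finally show ?thesis .
  qed
  have E: "inner (p - x) (l *\<^sub>R a - l *\<^sub>R u) =
      inner (p - x) (q - p) - l * inner (p - x) (B p - B x) + l * inner (p - x) (B p - B q)
      - m * inner (p - x) (B q - B r)"
    unfolding la ux by (simp add: algebra_simps inner_diff_right inner_add_right)
  have N1: "(norm (q - x))\<^sup>2 = (norm (p - x))\<^sup>2 + 2 * inner (p - x) (q - p) + nb^2"
  proof -
    have "q - x = (p - x) + (q - p)" by simp
    hence "(norm (q - x))\<^sup>2 = (norm ((p - x) + (q - p)))\<^sup>2" by metis
    also have "\<dots> = (norm (p - x))\<^sup>2 + 2 * inner (p - x) (q - p) + nb^2"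
      unfolding nb_def using dot_norm[of "p - x" "q - p"] by simp
    finally show ?thesis .
  qed
  have E2: "- inner (p - x) (B q - B r) = inner (x - q) (B q - B r) + inner (q - p) (B q - B r)"
    by (simp add: inner_diff_left algebra_simps)
  have E3: "inner (B p - B q) (x - p) = - inner (p - x) (B p - B q)"
    by (simp add: inner_commute inner_diff_left inner_diff_right algebra_simps)
  have E4: "inner (B q - B r) (x - q) = inner (x - q) (B q - B r)" by (simp add: inner_commute)
  have nbn: "norm (p - q) = nb" unfolding nb_def by (simp add: norm_minus_commute)
  have lpos: "0 \<le> l" using lb eps by simp
  have "0 \<le> l * inner (p - x) (B p - B x)" using lpos h2 by simp
  show ?thesis
    unfolding p_def[symmetric] q_def[symmetric] r_def[symmetric] l_def[symmetric] m_def[symmetric]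
      E3 E4 nbn na_def[symmetric]
    using h1' E N1 E2 h4 \<open>0 \<le> l * inner (p - x) (B p - B x)\<close>
    by (simp add: algebra_simps)
qed

end
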